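(* Let $G$ be a connected graph with vertex set $V(G)=\{u_1,\dots,u_n\}$, $n\ge 2$, let $U_1,\dots,U_k$ be the non-singleton true twin equivalence classes of $G$, and let $\mathcal{H}=\{H_1,\dots,H_n\}$ be a family of graphs. Then $$\dim_l(G\circ\mathcal{H})=\sum_{i=1}^{n}\operatorname{adim}_l(H_i)+\sum_{j:\,I\cap U_j\ne\emptyset}\big(|I\cap U_j|-1\big)+\varrho(G,\mathcal{H}).$$
   Context: All graphs are finite and simple with at least one vertex. $d_G$ is the shortest-path distance ($d_G(x,y)=+\infty$ if $x,y$ lie in different components), and $d_{G,2}(x,y)=\min\{d_G(x,y),2\}$. A vertex $s$ distinguishes $x,y$ (with respect to a distance $d$) if $d(s,x)\ne d(s,y)$. For a connected graph $G$, a set $S\subseteq V(G)$ is a local metric generator if every two adjacent vertices of $G$ are distinguished w.r.t. $d_G$ by some vertex of $S$; $\dim_l(G)$ is the minimum size of such a set. A set $S\subseteq V(H)$ is a local adjacency generator of a graph $H$ if every two adjacent vertices of $H$ are distinguished w.r.t. $d_{H,2}$ by some vertex of $S$ (equivalently, for any adjacent $x,y\notin S$ some $s\in S$ is adjacent to exactly one of them); $\operatorname{adim}_l(H)$ is the minimum size of such a set, and a minimum one is a local adjacency basis. $\Phi$ denotes the class of empty (edgeless) graphs. $\mathcal{G}$ denotes the class of graphs $H$ such that for every local adjacency basis $B$ of $H$ there is $v\in V(H)$ with $B\subseteq N_H(v)$ (open neighbourhood). Vertices $x,y$ are true twins if $N[x]=N[y]$; this is an equivalence relation. The lexicographic product $G\circ\mathcal{H}$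 has vertex set $\bigcup_i \{u_i\}\times V(H_i)$, with $(u_i,v)\sim(u_j,w)$ iff $u_iu_j\in E(G)$, or $i=j$ and $vw\in E(H_i)$. Notation: $T(G)=\bigcup_{j}U_j$; $V_E=\{u_i\in V(G)-T(G): H_i\in\Phi\}$; $I=\{u_i\in V(G): H_i\in\mathcal{G}\}$; for each $j$ with $I\cap U_j\neq\emptyset$ choose (arbitrarily) one vertex of $I\cap U_j$ and let $I'_j$ be the set of the remaining vertices of $I\cap U_j$ ($I'_j=\emptyset$ otherwise); $X_E=I-\bigcup_j I'_j$. Two vertices $u_i,u_j\in X_E$ satisfy relation $\mathcal{R}$ iff $u_i\sim u_j$ and $d_G(u,u_i)=d_G(u,u_j)$ for all $u\in V(G)-(V_E\cup\{u_i,u_j\})$. $\varrho(G,\mathcal{H})$ is the minimum of $|A|$ over sets $A\subseteq X_E$ such that every pair $u_i,u_j\in X_E$ satisfying $\mathcal{R}$ is distinguished (w.r.t. $d_G$) by some vertex of $A$. *)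

theory Defs
  imports "HOL-Library.Extended_Nat"
begin

definition graph :: "'a set \<Rightarrow> ('a \<Rightarrow> 'a \<Rightarrow> bool) \<Rightarrow> bool" where
  "graph V E \<longleftrightarrow> finite V \<and> V \<noteq> {} \<and> (\<forall>x y. E x y \<longrightarrow> x \<in> V \<and> y \<in> V)
     \<and> (\<forall>x y. E x y \<longrightarrow> E y x) \<and> (\<forall>x. \<not> E x x)"

definition dist :: "('a \<Rightarrow> 'a \<Rightarrow> bool) \<Rightarrow> 'a \<Rightarrow> 'a \<Rightarrow> enat" where
  "dist E x y = (INF k \<in> {k. (E ^^ k) x y}. enat k)"

definition dist2 :: "('a \<Rightarrow> 'a \<Rightarrow> bool) \<Rightarrow> 'a \<Rightarrow> 'a \<Rightarrow> enat" where
  "dist2 E x y = min (dist E x y) 2"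

definition connected_graph :: "'a set \<Rightarrow> ('a \<Rightarrow> 'a \<Rightarrow> bool) \<Rightarrow> bool" where
  "connected_graph V E \<longleftrightarrow> graph V E \<and> (\<forall>x\<in>V. \<forall>y\<in>V. dist E x y \<noteq> \<infinity>)"

definition local_metric_generator :: "'a set \<Rightarrow> ('a \<Rightarrow> 'a \<Rightarrow> bool) \<Rightarrow> 'a set \<Rightarrow> bool" where
  "local_metric_generator V E S \<longleftrightarrow> S \<subseteq> V \<and>
     (\<forall>x y. E x y \<longrightarrow> (\<exists>s\<in>S. dist E s x \<noteq> dist E s y))"

definition local_metric_dim :: "'a set \<Rightarrow> ('a \<Rightarrow> 'a \<Rightarrow> bool) \<Rightarrow> nat" where
  "local_metric_dim V E = Min {card S | S. local_metric_generator V E S}"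

definition local_adj_generator :: "'a set \<Rightarrow> ('a \<Rightarrow> 'a \<Rightarrow> bool) \<Rightarrow> 'a set \<Rightarrow> bool" where
  "local_adj_generator V E S \<longleftrightarrow> S \<subseteq> V \<and>
     (\<forall>x y. E x y \<longrightarrow> (\<exists>s\<in>S. dist2 E s x \<noteq> dist2 E s y))"

definition local_adj_dim :: "'a set \<Rightarrow> ('a \<Rightarrow> 'a \<Rightarrow> bool) \<Rightarrow> nat" where
  "local_adj_dim V E = Min {card S | S. local_adj_generator V E S}"

definition local_adj_basis :: "'a set \<Rightarrow> ('a \<Rightarrow> 'a \<Rightarrow> bool) \<Rightarrow> 'a set \<Rightarrow> bool" where
  "local_adj_basis V E B \<longleftrightarrow> local_adj_generator V E B \<and> card B = local_adj_dim V E"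

definition open_nbhd :: "('a \<Rightarrow> 'a \<Rightarrow> bool) \<Rightarrow> 'a \<Rightarrow> 'a set" where
  "open_nbhd E v = {w. E v w}"

definition closed_nbhd :: "('a \<Rightarrow> 'a \<Rightarrow> bool) \<Rightarrow> 'a \<Rightarrow> 'a set" where
  "closed_nbhd E v = insert v (open_nbhd E v)"

definition empty_graph :: "'a set \<Rightarrow> ('a \<Rightarrow> 'a \<Rightarrow> bool) \<Rightarrow> bool" where
  "empty_graph V E \<longleftrightarrow> (\<forall>x y. \<not> E x y)"

definition class_G :: "'a set \<Rightarrow> ('a \<Rightarrow> 'a \<Rightarrow> bool) \<Rightarrow> bool" where
  "class_G V E \<longleftrightarrow> (\<forall>B. local_adj_basis V E B \<longrightarrow> (\<exists>v\<in>V. B \<subseteq> open_nbhd E v))"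

definition twin_class :: "'a set \<Rightarrow> ('a \<Rightarrow> 'a \<Rightarrow> bool) \<Rightarrow> 'a \<Rightarrow> 'a set" where
  "twin_class V E x = {y\<in>V. closed_nbhd E y = closed_nbhd E x}"

definition twin_classes_nonsingleton :: "'a set \<Rightarrow> ('a \<Rightarrow> 'a \<Rightarrow> bool) \<Rightarrow> 'a set set" where
  "twin_classes_nonsingleton V E = {twin_class V E x | x. x \<in> V \<and> card (twin_class V E x) \<ge> 2}"

definition T_set :: "'a set \<Rightarrow> ('a \<Rightarrow> 'a \<Rightarrow> bool) \<Rightarrow> 'a set" where
  "T_set V E = \<Union> (twin_classes_nonsingleton V E)"

definition lex_V :: "'a set \<Rightarrow> ('a \<Rightarrow> 'b set) \<Rightarrow> ('a \<times> 'b) set" where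
  "lex_V V HV = {(u, v). u \<in> V \<and> v \<in> HV u}"

definition lex_E :: "'a set \<Rightarrow> ('a \<Rightarrow> 'a \<Rightarrow> bool) \<Rightarrow> ('a \<Rightarrow> 'b set) \<Rightarrow> ('a \<Rightarrow> 'b \<Rightarrow> 'b \<Rightarrow> bool)
    \<Rightarrow> ('a \<times> 'b) \<Rightarrow> ('a \<times> 'b) \<Rightarrow> bool" where
  "lex_E V E HV HE p q \<longleftrightarrow> p \<in> lex_V V HV \<and> q \<in> lex_V V HV \<and>
     (E (fst p) (fst q) \<or> (fst p = fst q \<and> HE (fst p) (snd p) (snd q)))"

definition V_E_set :: "'a set \<Rightarrow> ('a \<Rightarrow> 'a \<Rightarrow> bool) \<Rightarrow> ('a \<Rightarrow> 'b set) \<Rightarrow> ('a \<Rightarrow> 'b \<Rightarrow> 'b \<Rightarrow> bool) \<Rightarrow> 'a set" where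
  "V_E_set V E HV HE = {u \<in> V - T_set V E. empty_graph (HV u) (HE u)}"

definition I_set :: "'a set \<Rightarrow> ('a \<Rightarrow> 'b set) \<Rightarrow> ('a \<Rightarrow> 'b \<Rightarrow> 'b \<Rightarrow> bool) \<Rightarrow> 'a set" where
  "I_set V HV HE = {u \<in> V. class_G (HV u) (HE u)}"

text \<open>rep U is the chosen vertex of I \<inter> U (for non-singleton classes U meeting I);
I'_j = (I \<inter> U_j) - {rep U_j}; X_E = I minus all I'_j.\<close>
definition X_E_set :: "'a set \<Rightarrow> ('a \<Rightarrow> 'a \<Rightarrow> bool) \<Rightarrow> ('a \<Rightarrow> 'b set) \<Rightarrow> ('a \<Rightarrow> 'b \<Rightarrow> 'b \<Rightarrow> bool)
    \<Rightarrow> ('a set \<Rightarrow> 'a) \<Rightarrow> 'a set" where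
  "X_E_set V E HV HE rep = I_set V HV HE -
     (\<Union>U\<in>twin_classes_nonsingleton V E. (I_set V HV HE \<inter> U) - {rep U})"

definition rel_R :: "'a set \<Rightarrow> ('a \<Rightarrow> 'a \<Rightarrow> bool) \<Rightarrow> ('a \<Rightarrow> 'b set) \<Rightarrow> ('a \<Rightarrow> 'b \<Rightarrow> 'b \<Rightarrow> bool)
    \<Rightarrow> ('a set \<Rightarrow> 'a) \<Rightarrow> 'a \<Rightarrow> 'a \<Rightarrow> bool" where
  "rel_R V E HV HE rep x y \<longleftrightarrow> x \<in> X_E_set V E HV HE rep \<and> y \<in> X_E_set V E HV HE rep \<and> E x y \<and>
     (\<forall>u \<in> V - (V_E_set V E HV HE \<union> {x, y}). dist E u x = dist E u y)"

definition varrho :: "'a set \<Rightarrow> ('a \<Rightarrow> 'a \<Rightarrow> bool) \<Rightarrow> ('a \<Rightarrow> 'b set) \<Rightarrow> ('a \<Rightarrow> 'b \<Rightarrow> 'b \<Rightarrow> bool)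
    \<Rightarrow> ('a set \<Rightarrow> 'a) \<Rightarrow> nat" where
  "varrho V E HV HE rep = Min {card A | A. A \<subseteq> X_E_set V E HV HE rep \<and>
     (\<forall>x y. rel_R V E HV HE rep x y \<longrightarrow> (\<exists>a\<in>A. dist E a x \<noteq> dist E a y))}"

end

theory Submission
  imports Defs
begin

lemma dist_le: "(E ^^ k) x y \<Longrightarrow> dist E x y \<le> enat k"
  unfolding dist_def by (rule INF_lower2[of k]) auto

lemma dist_ge: "(\<And>j. (E ^^ j) x y \<Longrightarrow> k \<le> j) \<Longrightarrow> enat k \<le> dist E x y"
  unfolding dist_def by (rule INF_greatest) auto

lemma dist_inf: "dist E x y = \<infinity> \<longleftrightarrow> (\<forall>k. \<not> (E ^^ k) x y)"
proof
  assume "dist E x y = \<infinity>"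
  then show "\<forall>k. \<not> (E ^^ k) x y" using dist_le[of _ E x y] by (metis enat_ord_simps(4) infinity_ileE)
next
  assume "\<forall>k. \<not> (E ^^ k) x y"
  then show "dist E x y = \<infinity>" unfolding dist_def by (simp add: top_enat_def)
qed

lemma dist_enatD: "dist E x y = enat k \<Longrightarrow> (E ^^ k) x y"
proof -
  assume h: "dist E x y = enat k"
  have ne: "{k. (E ^^ k) x y} \<noteq> {}" using h dist_inf[of E x y] by auto
  have "Inf (enat ` {k. (E ^^ k) x y}) \<in> enat ` {k. (E ^^ k) x y}"
    using ne unfolding Inf_enat_def by (auto intro: LeastI)
  then show ?thesis using h unfolding dist_def by auto
qed

lemma dist_self[simp]: "dist E x x = 0"
  using dist_le[of 0 E x x] by (metis zero_enat_def ile0_eq relpowp_0_I)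

lemma dist_zero_iff: "dist E x y = 0 \<longleftrightarrow> x = y"
  using dist_enatD[of E x y 0] by (auto simp: zero_enat_def)

lemma dist_one_iff:
  assumes irr: "\<forall>z. \<not> E z z"
  shows "dist E x y = 1 \<longleftrightarrow> E x y"
proof
  assume "dist E x y = 1" then show "E x y" using dist_enatD[of E x y 1] by (auto simp: one_enat_def)
next
  assume e: "E x y"
  have "(E ^^ 1) x y" using e by (simp only: relpowp_1)
  then have "dist E x y \<le> 1" using dist_le[of 1 E x y] by (simp add: one_enat_def)
  moreover have "x \<noteq> y" using e irr by auto
  then have "dist E x y \<noteq> 0" by (simp add: dist_zero_iff)
  ultimately show "dist E x y = 1"
    by (cases "dist E x y") (auto simp: one_enat_def zero_enat_def)
qed

lemma dist_two:
  assumes irr: "\<forall>z. \<not> E z z" and "(E ^^ 2) x y" "x \<noteq> y" "\<not> E x y"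
  shows "dist E x y = 2"
proof -
  have le: "dist E x y \<le> 2" using dist_le[OF assms(2)] by (simp add: numeral_eq_enat)
  have "dist E x y \<noteq> 0" "dist E x y \<noteq> 1" using assms dist_zero_iff[of E x y] dist_one_iff[of E, OF irr] by auto
  with le show ?thesis
    by (cases "dist E x y") (auto simp: one_enat_def zero_enat_def numeral_eq_enat)
qed

lemma dist2_eq:
  assumes irr: "\<forall>z. \<not> E z z"
  shows "dist2 E x y = (if x = y then 0 else if E x y then 1 else 2)"
proof -
  have "x \<noteq> y \<Longrightarrow> \<not> E x y \<Longrightarrow> dist E x y \<ge> 2"
    using dist_zero_iff[of E x y] dist_one_iff[of E, OF irr, of x y]
    by (cases "dist E x y") (auto simp: one_enat_def zero_enat_def numeral_eq_enat)
  then show ?thesis unfolding dist2_def using dist_zero_iff[of E x y] dist_one_iff[of E, OF irr, of x y]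
    by (auto simp: min_def)
qed

locale setting =
  fixes V :: "'a set" and E :: "'a \<Rightarrow> 'a \<Rightarrow> bool"
    and HV :: "'a \<Rightarrow> 'b set" and HE :: "'a \<Rightarrow> 'b \<Rightarrow> 'b \<Rightarrow> bool"
  assumes conn: "connected_graph V E"
    and card2: "card V \<ge> 2"
    and HG: "\<And>u. u \<in> V \<Longrightarrow> graph (HV u) (HE u)"
begin

abbreviation "P \<equiv> lex_E V E HV HE"
abbreviation "LV \<equiv> lex_V V HV"

lemma G: "graph V E" using conn unfolding connected_graph_def by auto
lemma finV: "finite V" using G unfolding graph_def by auto
lemma EV: "E x y \<Longrightarrow> x \<in> V \<and> y \<in> V" using G unfolding graph_def by auto
lemma Esym: "E x y \<Longrightarrow> E y x" using G unfolding graph_def by auto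
lemma Eirr: "\<not> E x x" using G unfolding graph_def by auto
lemma Eirr': "\<forall>z. \<not> E z z" using Eirr by auto
lemma connd: "x \<in> V \<Longrightarrow> y \<in> V \<Longrightarrow> dist E x y \<noteq> \<infinity>" using conn unfolding connected_graph_def by auto

lemma HVne: "u \<in> V \<Longrightarrow> HV u \<noteq> {}" using HG[of u] unfolding graph_def by auto
lemma HVfin: "u \<in> V \<Longrightarrow> finite (HV u)" using HG[of u] unfolding graph_def by auto
lemma HEV: "u \<in> V \<Longrightarrow> HE u a b \<Longrightarrow> a \<in> HV u \<and> b \<in> HV u" using HG[of u] unfolding graph_def by auto
lemma HEsym: "u \<in> V \<Longrightarrow> HE u a b \<Longrightarrow> HE u b a" using HG[of u] unfolding graph_def by auto
lemma HEirr: "u \<in> V \<Longrightarrow> \<not> HE u a a" using HG[of u] unfolding graph_def by auto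
lemma HEirr': "u \<in> V \<Longrightarrow> \<forall>z. \<not> HE u z z" using HEirr by auto

lemma P_irr: "\<forall>z. \<not> P z z" unfolding lex_E_def lex_V_def using Eirr HEirr by auto

lemma LV_iff: "(u, a) \<in> LV \<longleftrightarrow> u \<in> V \<and> a \<in> HV u" unfolding lex_V_def by auto

lemma finLV: "finite LV"
proof -
  have "LV \<subseteq> V \<times> (\<Union>u\<in>V. HV u)" unfolding lex_V_def by auto
  then show ?thesis using finV HVfin by (meson finite_SigmaI finite_UN_I finite_subset)
qed

lemma has_nbr: assumes "u \<in> V" shows "\<exists>w. E u w"
proof -
  have "\<exists>w\<in>V. w \<noteq> u"
  proof (rule ccontr)
    assume "\<not> ?thesis" then have "V \<subseteq> {u}" by auto
    then have "card V \<le> 1" using card_mono[of "{u}" V] by auto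
    then show False using card2 by auto
  qed
  then obtain w where w: "w \<in> V" "w \<noteq> u" by auto
  then have "\<not> (\<forall>k. \<not> (E ^^ k) u w)" using connd[OF assms w(1)] dist_inf[of E u w] by simp
  then obtain k where k: "(E ^^ k) u w" by blast
  then obtain m where "k = Suc m" using w(2) by (cases k) auto
  then show ?thesis using k relpowp_Suc_D2[of m E u w] by auto
qed

lemma lift: "(E ^^ k) u v \<Longrightarrow> k \<ge> 1 \<Longrightarrow> u \<in> V \<Longrightarrow> a \<in> HV u \<Longrightarrow> b \<in> HV v \<Longrightarrow> (P ^^ k) (u, a) (v, b)"
proof (induction k arbitrary: u a)
  case 0 then show ?case by simp
next
  case (Suc k)
  show ?case
  proof (cases k)
    case 0
    then have "E u v" using Suc by (metis One_nat_def relpowp_1)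
    then have "P (u, a) (v, b)" using Suc EV unfolding lex_E_def lex_V_def by auto
    then show ?thesis using 0 by (simp only: One_nat_def[symmetric] relpowp_1)
  next
    case (Suc m)
    obtain z where z: "E u z" "(E ^^ k) z v" using \<open>(E ^^ Suc k) u v\<close> relpowp_Suc_D2[of k E u v] by auto
    have zV: "z \<in> V" using EV z by auto
    then obtain c where c: "c \<in> HV z" using HVne by blast
    have "P (u, a) (z, c)" using z Suc.prems EV c unfolding lex_E_def lex_V_def by auto
    moreover have "(P ^^ k) (z, c) (v, b)" using Suc.IH[OF z(2) _ zV c Suc.prems(5)] Suc by simp
    ultimately show ?thesis by (rule relpowp_Suc_I2)
  qed
qed

lemma proj: "(P ^^ k) p q \<Longrightarrow> \<exists>j\<le>k. (E ^^ j) (fst p) (fst q)"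
proof (induction k arbitrary: q)
  case 0 then show ?case by auto
next
  case (Suc k)
  obtain r where r: "(P ^^ k) p r" "P r q" using Suc.prems by (auto elim: relpowp_Suc_E)
  obtain j where j: "j \<le> k" "(E ^^ j) (fst p) (fst r)" using Suc.IH[OF r(1)] by auto
  show ?case
  proof (cases "E (fst r) (fst q)")
    case True
    then have "(E ^^ Suc j) (fst p) (fst q)" by (rule relpowp_Suc_I[OF j(2)])
    then show ?thesis using j by (intro exI[of _ "Suc j"]) auto
  next
    case False
    then have "fst r = fst q" using r(2) unfolding lex_E_def by auto
    then show ?thesis using j by (intro exI[of _ j]) auto
  qed
qed

lemma distP_diff:
  assumes "u \<in> V" "v \<in> V" "a \<in> HV u" "b \<in> HV v" "u \<noteq> v"
  shows "dist P (u, a) (v, b) = dist E u v"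
proof -
  obtain k where k: "dist E u v = enat k" using connd[OF assms(1,2)] by auto
  then have ek: "(E ^^ k) u v" using dist_enatD by metis
  have "k \<noteq> 0" using ek assms(5) by (cases k) auto
  then have "(P ^^ k) (u, a) (v, b)" using lift[OF ek _ assms(1,3,4)] by simp
  then have le: "dist P (u, a) (v, b) \<le> enat k" by (rule dist_le)
  then obtain m where m: "dist P (u, a) (v, b) = enat m" by (cases "dist P (u, a) (v, b)") auto
  then obtain j where "j \<le> m" "(E ^^ j) u v" using proj[OF dist_enatD[OF m]] by auto
  then have "dist E u v \<le> enat m" using dist_le[of j E u v] by (simp add: order_trans)
  then show ?thesis using le k m by auto
qed

lemma distP_same:
  assumes "u \<in> V" "a \<in> HV u" "b \<in> HV u"
  shows "dist P (u, a) (u, b) = dist2 (HE u) a b"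
proof -
  have d2: "dist2 (HE u) a b = (if a = b then 0 else if HE u a b then 1 else 2)"
    using dist2_eq[of "HE u", OF HEirr'[OF assms(1)]] by simp
  show ?thesis
  proof (cases "a = b")
    case True then show ?thesis using d2 by simp
  next
    case ne: False
    show ?thesis
    proof (cases "HE u a b")
      case True
      then have "P (u, a) (u, b)" using assms unfolding lex_E_def lex_V_def by auto
      then show ?thesis using d2 ne True dist_one_iff[of P, OF P_irr] by auto
    next
      case False
      obtain w where w: "E u w" using has_nbr assms(1) by auto
      have wV: "w \<in> V" using w EV by auto
      then obtain c where c: "c \<in> HV w" using HVne by blast
      have "P (u, a) (w, c)" "P (w, c) (u, b)" using assms w c wV Esym unfolding lex_E_def lex_V_def by auto
      then have "(P ^^ Suc 1) (u, a) (u, b)" by (intro relpowp_Suc_I2[of P _ "(w,c)"]) (simp_all only: relpowp_1)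
      then have "(P ^^ 2) (u, a) (u, b)" by (simp only: numeral_2_eq_2 One_nat_def)
      moreover have "\<not> P (u, a) (u, b)" using False Eirr unfolding lex_E_def by auto
      ultimately have "dist P (u, a) (u, b) = 2" using dist_two[of P, OF P_irr] ne by auto
      then show ?thesis using d2 ne False by auto
    qed
  qed
qed

end

context setting begin

definition sl :: "('a \<times> 'b) set \<Rightarrow> 'a \<Rightarrow> 'b set" where "sl S u = {a. (u, a) \<in> S}"
definition good :: "'a \<Rightarrow> 'b set \<Rightarrow> bool" where
  "good u C \<longleftrightarrow> (\<forall>a\<in>HV u. \<not> C \<subseteq> open_nbhd (HE u) a)"
abbreviation "gen u C \<equiv> local_adj_generator (HV u) (HE u) C"

lemma key_edge:
  assumes e: "E u v" and x: "a \<in> HV u" and y: "b \<in> HV v" and s: "w \<in> V" "c \<in> HV w"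
  shows "dist P (w, c) (u, a) \<noteq> dist P (w, c) (v, b) \<longleftrightarrow>
     (if w = u then \<not> HE u a c else if w = v then \<not> HE v b c else dist E w u \<noteq> dist E w v)"
proof -
  have uV: "u \<in> V" and vV: "v \<in> V" using e EV by auto
  have uv: "u \<noteq> v" using e Eirr by auto
  have d1: "dist E u v = 1" "dist E v u = 1" using e Esym[OF e] dist_one_iff[of E, OF Eirr'] by auto
  show ?thesis
  proof (cases "w = u")
    case True
    have cu: "c \<in> HV u" using s(2) True by simp
    have "dist P (w, c) (u, a) = dist2 (HE u) c a" using distP_same[OF uV cu x] True by simp
    moreover have "dist P (w, c) (v, b) = 1" using distP_diff[OF uV vV cu y uv] True d1 by simp
    moreover have "dist2 (HE u) c a = 1 \<longleftrightarrow> HE u a c"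
      using dist2_eq[of "HE u", OF HEirr'[OF uV]] HEsym[OF uV] HEirr[OF uV] by auto
    ultimately show ?thesis using True by auto
  next
    case nu: False
    show ?thesis
    proof (cases "w = v")
      case True
      have cv: "c \<in> HV v" using s(2) True by simp
      have "dist P (w, c) (v, b) = dist2 (HE v) c b" using distP_same[OF vV cv y] True by simp
      moreover have "dist P (w, c) (u, a) = 1" using distP_diff[OF vV uV cv x] True d1 uv by simp
      moreover have "dist2 (HE v) c b = 1 \<longleftrightarrow> HE v b c"
        using dist2_eq[of "HE v", OF HEirr'[OF vV]] HEsym[OF vV] HEirr[OF vV] by auto
      ultimately show ?thesis using True nu by auto
    next
      case False
      then show ?thesis using nu distP_diff[OF s(1) uV s(2) x] distP_diff[OF s(1) vV s(2) y] by auto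
    qed
  qed
qed

lemma char:
  assumes SL: "S \<subseteq> LV"
  shows "local_metric_generator LV P S \<longleftrightarrow>
    (\<forall>u\<in>V. gen u (sl S u)) \<and>
    (\<forall>u v. E u v \<longrightarrow> (\<exists>w\<in>V-{u,v}. sl S w \<noteq> {} \<and> dist E w u \<noteq> dist E w v)
        \<or> good u (sl S u) \<or> good v (sl S v))"
proof
  assume L: "local_metric_generator LV P S"
  then have D: "\<And>x y. P x y \<Longrightarrow> \<exists>s\<in>S. dist P s x \<noteq> dist P s y"
    unfolding local_metric_generator_def by auto
  have part1: "gen u (sl S u)" if uV: "u \<in> V" for u
    unfolding local_adj_generator_def
  proof (intro conjI allI impI)
    show "sl S u \<subseteq> HV u" using SL unfolding sl_def lex_V_def by auto
  next
    fix a b assume h: "HE u a b"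
    then have ab: "a \<in> HV u" "b \<in> HV u" using HEV uV by auto
    have "P (u, a) (u, b)" using h uV ab unfolding lex_E_def lex_V_def by auto
    then obtain s where s: "s \<in> S" "dist P s (u, a) \<noteq> dist P s (u, b)" using D by blast
    obtain w c where wc: "s = (w, c)" by force
    have sV: "w \<in> V" "c \<in> HV w" using s(1) wc SL unfolding lex_V_def by auto
    show "\<exists>s\<in>sl S u. dist2 (HE u) s a \<noteq> dist2 (HE u) s b"
    proof (cases "w = u")
      case True
      then show ?thesis using s wc distP_same[OF uV _ ab(1)] distP_same[OF uV _ ab(2)] sV
        unfolding sl_def by (intro bexI[of _ c]) auto
    next
      case False
      then show ?thesis using s wc distP_diff[OF sV(1) uV sV(2) ab(1)] distP_diff[OF sV(1) uV sV(2) ab(2)] by auto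
    qed
  qed
  have part2: "(\<exists>w\<in>V-{u,v}. sl S w \<noteq> {} \<and> dist E w u \<noteq> dist E w v) \<or> good u (sl S u) \<or> good v (sl S v)"
    if e: "E u v" for u v
  proof (rule ccontr)
    assume nn: "\<not> ?thesis"
    then obtain a where a: "a \<in> HV u" "sl S u \<subseteq> open_nbhd (HE u) a" unfolding good_def by auto
    obtain b where b: "b \<in> HV v" "sl S v \<subseteq> open_nbhd (HE v) b" using nn unfolding good_def by auto
    have "P (u, a) (v, b)" using e a b EV unfolding lex_E_def lex_V_def by auto
    then obtain s where s: "s \<in> S" "dist P s (u, a) \<noteq> dist P s (v, b)" using D by blast
    obtain w c where wc: "s = (w, c)" by force
    have sV: "w \<in> V" "c \<in> HV w" using s(1) wc SL unfolding lex_V_def by auto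
    have k: "(if w = u then \<not> HE u a c else if w = v then \<not> HE v b c else dist E w u \<noteq> dist E w v)"
      using key_edge[OF e a(1) b(1) sV] s wc by auto
    have cw: "c \<in> sl S w" using s wc unfolding sl_def by auto
    show False
    proof (cases "w = u")
      case True then show ?thesis using k a cw unfolding open_nbhd_def by auto
    next
      case False
      show ?thesis
      proof (cases "w = v")
        case True then show ?thesis using k b cw False unfolding open_nbhd_def by auto
      next
        case False2: False
        then show ?thesis using nn k False sV cw by auto
      qed
    qed
  qed
  show "(\<forall>u\<in>V. gen u (sl S u)) \<and>
    (\<forall>u v. E u v \<longrightarrow> (\<exists>w\<in>V-{u,v}. sl S w \<noteq> {} \<and> dist E w u \<noteq> dist E w v)
        \<or> good u (sl S u) \<or> good v (sl S v))" using part1 part2 by blast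
next
  assume R: "(\<forall>u\<in>V. gen u (sl S u)) \<and>
    (\<forall>u v. E u v \<longrightarrow> (\<exists>w\<in>V-{u,v}. sl S w \<noteq> {} \<and> dist E w u \<noteq> dist E w v)
        \<or> good u (sl S u) \<or> good v (sl S v))"
  show "local_metric_generator LV P S"
    unfolding local_metric_generator_def
  proof (intro conjI allI impI)
    show "S \<subseteq> LV" by fact
  next
    fix x y assume xy: "P x y"
    obtain u a where x: "x = (u, a)" by force
    obtain v b where y: "y = (v, b)" by force
    have xL: "u \<in> V" "a \<in> HV u" and yL: "v \<in> V" "b \<in> HV v"
      using xy x y unfolding lex_E_def lex_V_def by auto
    show "\<exists>s\<in>S. dist P s x \<noteq> dist P s y"
    proof (cases "E u v")
      case e: True
      have C: "(\<exists>w\<in>V-{u,v}. sl S w \<noteq> {} \<and> dist E w u \<noteq> dist E w v) \<or> good u (sl S u) \<or> good v (sl S v)"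
        using R e by blast
      have uv: "u \<noteq> v" using e Eirr by auto
      show ?thesis
      proof -
        { assume "\<exists>w\<in>V-{u,v}. sl S w \<noteq> {} \<and> dist E w u \<noteq> dist E w v"
          then obtain w c where w: "w \<in> V" "w \<noteq> u" "w \<noteq> v" "c \<in> sl S w" "dist E w u \<noteq> dist E w v" by auto
          have cS: "(w, c) \<in> S" using w(4) unfolding sl_def by auto
          then have "c \<in> HV w" using SL unfolding lex_V_def by auto
          then have ?thesis using key_edge[OF e xL(2) yL(2) w(1)] w cS x y by (intro bexI[of _ "(w,c)"]) auto }
        moreover
        { assume "good u (sl S u)"
          then obtain c where c: "c \<in> sl S u" "\<not> HE u a c" using xL unfolding good_def open_nbhd_def by auto
          have cS: "(u, c) \<in> S" using c(1) unfolding sl_def by auto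
          then have "c \<in> HV u" using SL unfolding lex_V_def by auto
          then have ?thesis using key_edge[OF e xL(2) yL(2) xL(1)] c cS x y by (intro bexI[of _ "(u,c)"]) auto }
        moreover
        { assume "good v (sl S v)"
          then obtain c where c: "c \<in> sl S v" "\<not> HE v b c" using yL unfolding good_def open_nbhd_def by auto
          have cS: "(v, c) \<in> S" using c(1) unfolding sl_def by auto
          then have "c \<in> HV v" using SL unfolding lex_V_def by auto
          then have ?thesis using key_edge[OF e xL(2) yL(2) yL(1)] c cS x y uv by (intro bexI[of _ "(v,c)"]) auto }
        ultimately show ?thesis using C by blast
      qed
    next
      case False
      then have uv: "u = v" and h: "HE u a b" using xy x y unfolding lex_E_def by auto
      have bu: "b \<in> HV u" using yL uv by simp
      obtain c where c: "c \<in> sl S u" "dist2 (HE u) c a \<noteq> dist2 (HE u) c b"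
        using R xL h unfolding local_adj_generator_def by blast
      have cS: "(u, c) \<in> S" using c(1) unfolding sl_def by auto
      then have "c \<in> HV u" using SL unfolding lex_V_def by auto
      then show ?thesis using distP_same[OF xL(1) _ xL(2)] distP_same[OF xL(1) _ bu] c cS x y uv
        by (intro bexI[of _ "(u,c)"]) auto
    qed
  qed
qed

end

definition goodW :: "'b set \<Rightarrow> ('b \<Rightarrow> 'b \<Rightarrow> bool) \<Rightarrow> 'b set \<Rightarrow> bool" where
  "goodW W F C \<longleftrightarrow> (\<forall>a\<in>W. \<not> C \<subseteq> open_nbhd F a)"

lemma gen_W: assumes "graph W F" shows "local_adj_generator W F W"
  unfolding local_adj_generator_def
proof (intro conjI allI impI)
  fix x y assume h: "F x y"
  have irr: "\<forall>z. \<not> F z z" and "x \<in> W" "x \<noteq> y" using assms h unfolding graph_def by auto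
  then show "\<exists>s\<in>W. dist2 F s x \<noteq> dist2 F s y" using dist2_eq[of F, OF irr] by (intro bexI[of _ x]) auto
qed simp

lemma adim_fin: assumes "graph W F" shows "finite {card S | S. local_adj_generator W F S}"
proof -
  have "{card S | S. local_adj_generator W F S} \<subseteq> {..card W}"
    using assms unfolding graph_def local_adj_generator_def by (auto intro: card_mono)
  then show ?thesis using finite_subset by blast
qed

lemma adim_le: assumes "graph W F" "local_adj_generator W F C" shows "local_adj_dim W F \<le> card C"
  unfolding local_adj_dim_def using adim_fin[OF assms(1)] assms(2) by (intro Min_le) auto

lemma adim_basis: assumes "graph W F"
  shows "\<exists>B. local_adj_generator W F B \<and> card B = local_adj_dim W F"
proof -
  have "local_adj_dim W F \<in> {card S | S. local_adj_generator W F S}"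
    unfolding local_adj_dim_def using adim_fin[OF assms] gen_W[OF assms] by (intro Min_in) auto
  then show ?thesis by auto
qed

lemma notG_good: assumes "graph W F" "\<not> class_G W F"
  shows "\<exists>B. local_adj_generator W F B \<and> card B = local_adj_dim W F \<and> goodW W F B"
  using assms(2) unfolding class_G_def local_adj_basis_def goodW_def by auto

lemma G_good_card: assumes "graph W F" "class_G W F" "local_adj_generator W F C" "goodW W F C"
  shows "card C \<ge> local_adj_dim W F + 1"
proof -
  have "card C \<noteq> local_adj_dim W F"
  proof
    assume "card C = local_adj_dim W F"
    then have "local_adj_basis W F C" using assms(3) unfolding local_adj_basis_def by auto
    then show False using assms(2,4) unfolding class_G_def goodW_def by auto
  qed
  then show ?thesis using adim_le[OF assms(1,3)] by auto
qed

lemma G_good_ex: assumes g: "graph W F" "class_G W F"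
  shows "\<exists>C. local_adj_generator W F C \<and> goodW W F C \<and> card C = local_adj_dim W F + 1"
proof -
  obtain B where B: "local_adj_generator W F B" "card B = local_adj_dim W F" using adim_basis[OF g(1)] by auto
  then obtain v where v: "v \<in> W" "B \<subseteq> open_nbhd F v" using g(2) unfolding class_G_def local_adj_basis_def by auto
  have irr: "\<forall>z. \<not> F z z" and sym: "\<And>x y. F x y \<Longrightarrow> F y x" and fin: "finite W"
    using g(1) unfolding graph_def by auto
  have vB: "v \<notin> B" using v irr unfolding open_nbhd_def by auto
  have BW: "B \<subseteq> W" using B unfolding local_adj_generator_def by auto
  have finB: "finite B" using BW fin finite_subset by auto
  let ?C = "insert v B"
  have gen: "local_adj_generator W F ?C" using B(1) v(1) unfolding local_adj_generator_def by auto
  have good: "goodW W F ?C" unfolding goodW_def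
  proof (intro ballI notI)
    fix y assume y: "y \<in> W" and sub: "?C \<subseteq> open_nbhd F y"
    then have Fyv: "F y v" and By: "B \<subseteq> open_nbhd F y" unfolding open_nbhd_def by auto
    then obtain s where s: "s \<in> B" "dist2 F s y \<noteq> dist2 F s v"
      using B(1) unfolding local_adj_generator_def by blast
    have "F y s" "F v s" using s(1) By v(2) unfolding open_nbhd_def by auto
    then have "F s y" "F s v" "s \<noteq> y" "s \<noteq> v" using sym irr by auto
    then have "dist2 F s y = 1" "dist2 F s v = 1" using dist2_eq[of F, OF irr] by auto
    then show False using s(2) by simp
  qed
  have "card ?C = local_adj_dim W F + 1" using B(2) vB finB by simp
  then show ?thesis using gen good by blast
qed

lemma empty_props: assumes g: "graph W F" "empty_graph W F"
  shows "class_G W F" "local_adj_dim W F = 0" "\<And>C. C \<noteq> {} \<Longrightarrow> goodW W F C"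
proof -
  have gen0: "local_adj_generator W F {}" using g(2) unfolding local_adj_generator_def empty_graph_def by auto
  show d0: "local_adj_dim W F = 0" using adim_le[OF g(1) gen0] by simp
  show "class_G W F" unfolding class_G_def
  proof (intro allI impI)
    fix B assume "local_adj_basis W F B"
    then have "card B = 0" "B \<subseteq> W" using d0 unfolding local_adj_basis_def local_adj_generator_def by auto
    then have "B = {}" using g(1) unfolding graph_def by (meson card_0_eq finite_subset)
    moreover obtain v where "v \<in> W" using g(1) unfolding graph_def by auto
    ultimately show "\<exists>v\<in>W. B \<subseteq> open_nbhd F v" by auto
  qed
  show "\<And>C. C \<noteq> {} \<Longrightarrow> goodW W F C" using g(2) unfolding goodW_def empty_graph_def open_nbhd_def by auto
qed

lemma gen_ne: assumes "F x y" "local_adj_generator W F C" shows "C \<noteq> {}"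
  using assms unfolding local_adj_generator_def by blast

lemma good_ne: assumes "graph W F" "goodW W F C" shows "C \<noteq> {}"
  using assms unfolding graph_def goodW_def by auto

context setting begin

abbreviation "I \<equiv> I_set V HV HE"
abbreviation "emp u \<equiv> empty_graph (HV u) (HE u)"
abbreviation "adim u \<equiv> local_adj_dim (HV u) (HE u)"
definition "adsum = (\<Sum>u\<in>V. adim u)"

definition Cond :: "'a set \<Rightarrow> bool" where
  "Cond J \<longleftrightarrow> (\<forall>u v. E u v \<longrightarrow> u \<in> I \<longrightarrow> v \<in> I \<longrightarrow> u \<in> J \<or> v \<in> J \<or>
     (\<exists>w\<in>V-{u,v}. (\<not> emp w \<or> w \<in> J) \<and> dist E w u \<noteq> dist E w v))"

lemma good_eq: "good u C = goodW (HV u) (HE u) C" unfolding good_def goodW_def by simp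

lemma I_iff: "u \<in> I \<longleftrightarrow> u \<in> V \<and> class_G (HV u) (HE u)" unfolding I_set_def by simp

lemma emp_I: "u \<in> V \<Longrightarrow> emp u \<Longrightarrow> u \<in> I" using empty_props(1)[OF HG] I_iff by blast

lemma IV: "I \<subseteq> V" unfolding I_set_def by auto

lemma cardS: assumes "S \<subseteq> LV" shows "card S = (\<Sum>u\<in>V. card (sl S u))"
proof -
  have "S = (SIGMA u:V. sl S u)" using assms unfolding sl_def lex_V_def by auto
  moreover have "\<forall>u\<in>V. finite (sl S u)" using assms HVfin unfolding sl_def lex_V_def
    by (auto intro: finite_subset[of _ "HV _"])
  ultimately show ?thesis using finV card_SigmaI[of V "sl S"] by simp
qed

lemma sum_ind: "J \<subseteq> V \<Longrightarrow> (\<Sum>u\<in>V. adim u + of_bool (u \<in> J)) = adsum + card J"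
proof -
  assume J: "J \<subseteq> V"
  have "(\<Sum>u\<in>V. adim u + of_bool (u \<in> J)) = adsum + (\<Sum>u\<in>V. of_bool (u \<in> J))"
    unfolding adsum_def by (rule sum.distrib)
  also have "(\<Sum>u\<in>V. of_bool (u \<in> J)) = card J" using finV J by (simp add: Int_absorb1 Int_absorb2)
  finally show ?thesis .
qed

lemma lower:
  assumes L: "local_metric_generator LV P S"
  shows "Cond {u\<in>I. good u (sl S u)} \<and> adsum + card {u\<in>I. good u (sl S u)} \<le> card S"
proof -
  let ?J = "{u\<in>I. good u (sl S u)}"
  have SL: "S \<subseteq> LV" using L unfolding local_metric_generator_def by auto
  note ch = L[unfolded char[OF SL]]
  have c1: "adim u + of_bool (u \<in> ?J) \<le> card (sl S u)" if u: "u \<in> V" for u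
  proof -
    have g: "gen u (sl S u)" using ch u by auto
    show ?thesis
    proof (cases "u \<in> ?J")
      case True
      then have "class_G (HV u) (HE u)" "goodW (HV u) (HE u) (sl S u)" using I_iff good_eq by auto
      then show ?thesis using G_good_card[OF HG[OF u] _ g] True by auto
    next
      case False then show ?thesis using adim_le[OF HG[OF u] g] by auto
    qed
  qed
  have sJ: "?J \<subseteq> V" using IV by auto
  have "adsum + card ?J = (\<Sum>u\<in>V. adim u + of_bool (u \<in> ?J))" using sum_ind[OF sJ] by (rule sym)
  also have "\<dots> \<le> (\<Sum>u\<in>V. card (sl S u))" using c1 by (rule sum_mono)
  also have "\<dots> = card S" using cardS[OF SL] by simp
  finally have C1: "adsum + card ?J \<le> card S" .
  have "Cond ?J" unfolding Cond_def
  proof (intro allI impI)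
    fix u v assume e: "E u v" and uI: "u \<in> I" and vI: "v \<in> I"
    have "(\<exists>w\<in>V-{u,v}. sl S w \<noteq> {} \<and> dist E w u \<noteq> dist E w v) \<or> good u (sl S u) \<or> good v (sl S v)"
      using ch e by blast
    moreover
    { fix w assume w: "w \<in> V" "sl S w \<noteq> {}"
      have "\<not> emp w \<or> w \<in> ?J"
      proof (cases "emp w")
        case True
        then show ?thesis using emp_I[OF w(1)] empty_props(3)[OF HG[OF w(1)] True w(2)] good_eq by auto
      qed simp }
    ultimately show "u \<in> ?J \<or> v \<in> ?J \<or> (\<exists>w\<in>V-{u,v}. (\<not> emp w \<or> w \<in> ?J) \<and> dist E w u \<noteq> dist E w v)"
      using uI vI by blast
  qed
  then show ?thesis using C1 by blast
qed

lemma upper: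
  assumes JI: "J \<subseteq> I" and CJ: "Cond J"
  shows "\<exists>S. local_metric_generator LV P S \<and> card S = adsum + card J"
proof -
  define C where "C u = (if u \<notin> I then (SOME B. gen u B \<and> card B = adim u \<and> good u B)
      else if u \<in> J then (SOME B. gen u B \<and> good u B \<and> card B = adim u + 1)
      else (SOME B. gen u B \<and> card B = adim u))" for u
  have Cp: "gen u (C u) \<and> card (C u) = adim u + of_bool (u \<in> J) \<and> ((u \<notin> I \<or> u \<in> J) \<longrightarrow> good u (C u))"
    if u: "u \<in> V" for u
  proof (cases "u \<in> I")
    case False
    then have "\<not> class_G (HV u) (HE u)" using I_iff u by auto
    then have ex: "\<exists>B. gen u B \<and> card B = adim u \<and> good u B" using notG_good[OF HG[OF u]] good_eq by auto
    then have "gen u (C u) \<and> card (C u) = adim u \<and> good u (C u)"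
      using someI_ex[OF ex] False unfolding C_def by simp
    then show ?thesis using False JI by auto
  next
    case True
    show ?thesis
    proof (cases "u \<in> J")
      case inJ: True
      have "class_G (HV u) (HE u)" using True I_iff by auto
      then have ex: "\<exists>B. gen u B \<and> good u B \<and> card B = adim u + 1" using G_good_ex[OF HG[OF u]] good_eq by auto
      then have "gen u (C u) \<and> good u (C u) \<and> card (C u) = adim u + 1"
        using someI_ex[OF ex] True inJ unfolding C_def by simp
      then show ?thesis using inJ by auto
    next
      case nJ: False
      have ex: "\<exists>B. gen u B \<and> card B = adim u" using adim_basis[OF HG[OF u]] by auto
      then have "gen u (C u) \<and> card (C u) = adim u"
        using someI_ex[OF ex] True nJ unfolding C_def by simp
      then show ?thesis using nJ True by auto
    qed
  qed
  define S where "S = (SIGMA u:V. C u)"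
  have SL: "S \<subseteq> LV"
  proof
    fix x assume "x \<in> S"
    then obtain u a where x: "x = (u, a)" "u \<in> V" "a \<in> C u" unfolding S_def by auto
    have "C u \<subseteq> HV u" using Cp[OF x(2)] unfolding local_adj_generator_def by blast
    then show "x \<in> LV" using x unfolding lex_V_def by auto
  qed
  have slS: "sl S u = C u" if "u \<in> V" for u using that unfolding S_def sl_def by auto
  have LMG: "local_metric_generator LV P S"
    unfolding char[OF SL]
  proof (intro conjI ballI allI impI)
    fix u assume "u \<in> V" then show "gen u (sl S u)" using Cp slS by auto
  next
    fix u v assume e: "E u v"
    have uV: "u \<in> V" and vV: "v \<in> V" using e EV by auto
    show "(\<exists>w\<in>V-{u,v}. sl S w \<noteq> {} \<and> dist E w u \<noteq> dist E w v) \<or> good u (sl S u) \<or> good v (sl S v)"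
    proof (cases "u \<notin> I \<or> u \<in> J \<or> v \<notin> I \<or> v \<in> J")
      case True
      show ?thesis
      proof (cases "u \<notin> I \<or> u \<in> J")
        case True
        then have "good u (C u)" using Cp[OF uV] by blast
        then show ?thesis using slS[OF uV] by simp
      next
        case False
        then have "v \<notin> I \<or> v \<in> J" using \<open>u \<notin> I \<or> u \<in> J \<or> v \<notin> I \<or> v \<in> J\<close> by blast
        then have "good v (C v)" using Cp[OF vV] by blast
        then show ?thesis using slS[OF vV] by simp
      qed
    next
      case False
      then obtain w where w: "w \<in> V-{u,v}" "\<not> emp w \<or> w \<in> J" "dist E w u \<noteq> dist E w v"
        using CJ e unfolding Cond_def by blast
      have wV: "w \<in> V" using w by auto
      have "C w \<noteq> {}"
      proof (cases "emp w")
        case True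
        then have "w \<in> J" using w(2) by blast
        then have "good w (C w)" using Cp[OF wV] by blast
        then show ?thesis using good_ne[OF HG[OF wV]] good_eq by auto
      next
        case False
        then obtain x y where "HE w x y" unfolding empty_graph_def by auto
        moreover have "gen w (C w)" using Cp[OF wV] by blast
        ultimately show ?thesis using gen_ne by metis
      qed
      then show ?thesis using w slS[OF wV] by auto
    qed
  qed
  have "card S = (\<Sum>u\<in>V. card (C u))" using cardS[OF SL] slS by simp
  also have "\<dots> = (\<Sum>u\<in>V. adim u + of_bool (u \<in> J))" using Cp by (intro sum.cong) auto
  also have "\<dots> = adsum + card J" using sum_ind JI IV by auto
  finally show ?thesis using LMG by blast
qed

lemma final_reduce:
  assumes lo: "\<And>J. J \<subseteq> I \<Longrightarrow> Cond J \<Longrightarrow> M \<le> card J"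
    and up: "\<exists>J. J \<subseteq> I \<and> Cond J \<and> card J \<le> M"
  shows "local_metric_dim LV P = adsum + M"
proof -
  let ?X = "{card S | S. local_metric_generator LV P S}"
  have fin: "finite ?X"
  proof -
    have "?X \<subseteq> {..card LV}" using finLV unfolding local_metric_generator_def by (auto intro: card_mono)
    then show ?thesis using finite_subset by blast
  qed
  obtain J where J: "J \<subseteq> I" "Cond J" "card J \<le> M" using up by auto
  obtain S0 where S0: "local_metric_generator LV P S0" "card S0 = adsum + card J" using upper[OF J(1,2)] by auto
  have "Min ?X \<le> card S0" using fin S0(1) by (intro Min_le) auto
  then have le: "Min ?X \<le> adsum + M" using S0(2) J(3) by auto
  have "Min ?X \<in> ?X" using fin S0 by (intro Min_in) auto
  then obtain S where S: "local_metric_generator LV P S" "Min ?X = card S" by auto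
  have "adsum + M \<le> card S" using lower[OF S(1)] lo[of "{u\<in>I. good u (sl S u)}"] by auto
  then show ?thesis unfolding local_metric_dim_def using le S(2) by auto
qed

end

context setting begin

abbreviation "N x \<equiv> closed_nbhd E x"
abbreviation "CL \<equiv> twin_classes_nonsingleton V E"
abbreviation "TT \<equiv> T_set V E"
abbreviation "CI \<equiv> {U \<in> CL. I \<inter> U \<noteq> {}}"

lemma N_iff: "y \<in> N x \<longleftrightarrow> y = x \<or> E x y" unfolding closed_nbhd_def open_nbhd_def by auto

lemma tc_iff: "y \<in> twin_class V E x \<longleftrightarrow> y \<in> V \<and> N y = N x" unfolding twin_class_def by auto

lemma CL_D: "U \<in> CL \<Longrightarrow> \<exists>x\<in>V. U = twin_class V E x \<and> card U \<ge> 2"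
  unfolding twin_classes_nonsingleton_def by auto

lemma CL_sub: "U \<in> CL \<Longrightarrow> U \<subseteq> V" using CL_D tc_iff by blast

lemma CL_same: assumes "U \<in> CL" "y \<in> U" "z \<in> U" shows "N y = N z"
proof -
  obtain x where x: "U = twin_class V E x" using CL_D assms(1) by blast
  show ?thesis using assms(2,3) unfolding x twin_class_def by auto
qed

lemma CL_disj: assumes "U \<in> CL" "U' \<in> CL" "z \<in> U" "z \<in> U'" shows "U = U'"
proof -
  obtain x where x: "x \<in> V" "U = twin_class V E x" using CL_D assms(1) by blast
  obtain x' where x': "x' \<in> V" "U' = twin_class V E x'" using CL_D assms(2) by blast
  have "N z = N x" "N z = N x'" using assms(3,4) x(2) x'(2) unfolding twin_class_def by auto
  then show ?thesis using x x' unfolding twin_class_def by auto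
qed

lemma finCL: "finite CL"
proof -
  have "CL \<subseteq> Pow V" using CL_sub by auto
  then show ?thesis using finV finite_subset by blast
qed

lemma CL_fin: "U \<in> CL \<Longrightarrow> finite U" using CL_sub finV finite_subset by blast

lemma TT_iff: "x \<in> TT \<longleftrightarrow> (\<exists>U\<in>CL. x \<in> U)" unfolding T_set_def by auto

lemma cl_of: assumes "y \<in> V" "z \<in> V" "N y = N z" "y \<noteq> z" shows "\<exists>U\<in>CL. y \<in> U \<and> z \<in> U"
proof -
  have yz: "{y, z} \<subseteq> twin_class V E y" using assms tc_iff by auto
  have "finite (twin_class V E y)" using finV unfolding twin_class_def by auto
  then have "card {y, z} \<le> card (twin_class V E y)" using yz card_mono by blast
  then have "card (twin_class V E y) \<ge> 2" using assms(4) by simp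
  then have "twin_class V E y \<in> CL" using assms(1) unfolding twin_classes_nonsingleton_def by blast
  then show ?thesis using yz by blast
qed

lemma twin_adj: assumes "N y = N z" "y \<noteq> z" shows "E y z"
proof -
  have "z \<in> N y" using assms(1) N_iff[of z z] by simp
  then show ?thesis using assms(2) N_iff[of z y] by auto
qed

lemma tw_le: assumes h: "\<And>z. E z x \<Longrightarrow> z = x' \<or> E z x'" and wx: "w \<noteq> x"
  shows "dist E w x' \<le> dist E w x"
proof (cases "dist E w x")
  case (enat k)
  then have ek: "(E ^^ k) w x" using dist_enatD by metis
  then obtain m where km: "k = Suc m" using wx by (cases k) auto
  then obtain z where z: "(E ^^ m) w z" "E z x" using ek by (auto elim: relpowp_Suc_E)
  show ?thesis
  proof (cases "z = x'")
    case True
    then have "dist E w x' \<le> enat m" using z dist_le by metis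
    then show ?thesis using enat km by (simp add: order_trans)
  next
    case False
    then have "E z x'" using h z(2) by blast
    then have "(E ^^ Suc m) w x'" by (rule relpowp_Suc_I[OF z(1)])
    then show ?thesis using enat km dist_le by metis
  qed
qed simp

lemma twin_dist: assumes "N x = N x'" "w \<noteq> x" "w \<noteq> x'" shows "dist E w x = dist E w x'"
proof -
  have a: "z = x' \<or> E z x'" if "E z x" for z
  proof -
    have "z \<in> N x" using that Esym N_iff by blast
    then have "z \<in> N x'" using assms(1) by simp
    then show ?thesis using N_iff Esym by blast
  qed
  have b: "z = x \<or> E z x" if "E z x'" for z
  proof -
    have "z \<in> N x'" using that Esym N_iff by blast
    then have "z \<in> N x" using assms(1) by simp
    then show ?thesis using N_iff Esym by blast
  qed
  show ?thesis using tw_le[OF a assms(2)] tw_le[OF b assms(3)] by auto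
qed

end

locale setting_rep = setting +
  fixes rep :: "'a set \<Rightarrow> 'a"
  assumes repI: "\<And>U. U \<in> twin_classes_nonsingleton V E \<Longrightarrow> I_set V HV HE \<inter> U \<noteq> {} \<Longrightarrow> rep U \<in> I_set V HV HE \<inter> U"
begin

abbreviation "XE \<equiv> X_E_set V E HV HE rep"
abbreviation "VE \<equiv> V_E_set V E HV HE"
abbreviation "RR \<equiv> rel_R V E HV HE rep"

lemma XE_sub: "XE \<subseteq> I" unfolding X_E_set_def by (rule Diff_subset)

lemma XE_rep: assumes "x \<in> XE" "U \<in> CL" "x \<in> U" shows "x = rep U"
proof (rule ccontr)
  assume "x \<noteq> rep U"
  moreover have "x \<in> I" using assms(1) unfolding X_E_set_def by simp
  ultimately have "x \<in> (I \<inter> U) - {rep U}" using assms(3) by simp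
  then have "x \<in> (\<Union>U\<in>CL. (I \<inter> U) - {rep U})" using assms(2) by (rule UN_I[rotated])
  then show False using assms(1) unfolding X_E_set_def by simp
qed

lemma XE_notT: "x \<in> I \<Longrightarrow> x \<notin> TT \<Longrightarrow> x \<in> XE"
  unfolding X_E_set_def T_set_def by auto

lemma rep_XE: assumes "U \<in> CI" shows "rep U \<in> XE"
proof -
  have r: "rep U \<in> I \<inter> U" using repI assms by blast
  have "rep U \<notin> (I \<inter> U') - {rep U'}" if "U' \<in> CL" for U'
  proof
    assume a: "rep U \<in> (I \<inter> U') - {rep U'}"
    have UC: "U \<in> CL" using assms by simp
    have "rep U \<in> U'" "rep U \<in> U" using a r by auto
    then have "U' = U" using CL_disj[OF that UC] by blast
    then show False using a by blast
  qed
  then show ?thesis using r unfolding X_E_set_def by auto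
qed

lemma I_minus_XE: "I - XE = (\<Union>U\<in>CL. (I \<inter> U) - {rep U})"
  unfolding X_E_set_def by auto

lemma VE_iff: "w \<in> VE \<longleftrightarrow> w \<in> V \<and> w \<notin> TT \<and> emp w" unfolding V_E_set_def by simp

lemma XE_fin: "finite XE" using finite_subset[OF subset_trans[OF XE_sub IV] finV] .

definition "validA A \<longleftrightarrow> A \<subseteq> XE \<and> (\<forall>x y. RR x y \<longrightarrow> (\<exists>a\<in>A. dist E a x \<noteq> dist E a y))"

lemma varrho_le: "validA A \<Longrightarrow> varrho V E HV HE rep \<le> card A"
proof -
  assume v: "validA A"
  have "{card A | A. A \<subseteq> XE \<and> (\<forall>x y. RR x y \<longrightarrow> (\<exists>a\<in>A. dist E a x \<noteq> dist E a y))} \<subseteq> {..card XE}"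
    using XE_fin by (auto intro: card_mono)
  then have fin: "finite {card A | A. A \<subseteq> XE \<and> (\<forall>x y. RR x y \<longrightarrow> (\<exists>a\<in>A. dist E a x \<noteq> dist E a y))}"
    using finite_subset[OF _ finite_atMost] by blast
  show ?thesis unfolding varrho_def using v validA_def by (intro Min_le[OF fin]) auto
qed

lemma varrho_ex: "\<exists>A. validA A \<and> card A = varrho V E HV HE rep"
proof -
  let ?X = "{card A | A. A \<subseteq> XE \<and> (\<forall>x y. RR x y \<longrightarrow> (\<exists>a\<in>A. dist E a x \<noteq> dist E a y))}"
  have "?X \<subseteq> {..card XE}" using XE_fin by (auto intro: card_mono)
  then have fin: "finite ?X" using finite_subset[OF _ finite_atMost] by blast
  have "validA XE" unfolding validA_def
  proof (intro conjI allI impI)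
    fix x y assume "RR x y"
    then have "x \<in> XE" "E x y" unfolding rel_R_def by auto
    then show "\<exists>a\<in>XE. dist E a x \<noteq> dist E a y" using Eirr dist_zero_iff[of E x y] by (intro bexI[of _ x]) auto
  qed simp
  then have "?X \<noteq> {}" unfolding validA_def by blast
  then have "Min ?X \<in> ?X" using fin by (intro Min_in) auto
  then show ?thesis unfolding varrho_def validA_def by auto
qed

end

context setting_rep begin

lemma RR_D: "RR x y \<Longrightarrow> x \<in> XE \<and> y \<in> XE \<and> E x y \<and> (\<forall>u\<in>V - (VE \<union> {x, y}). dist E u x = dist E u y)"
  unfolding rel_R_def by simp

lemma step1: assumes JI: "J \<subseteq> I" and CJ: "Cond J" and U: "U \<in> CI"
  shows "card (I \<inter> U) \<le> card (J \<inter> U) + 1"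
proof -
  have UC: "U \<in> CL" using U by simp
  have finU: "finite U" using CL_fin UC by blast
  have one: "z1 = z2" if z: "z1 \<in> I \<inter> U - J" "z2 \<in> I \<inter> U - J" for z1 z2
  proof (rule ccontr)
    assume ne: "z1 \<noteq> z2"
    have NN: "N z1 = N z2" using CL_same[OF UC] z by blast
    have e: "E z1 z2" using twin_adj[OF NN ne] .
    have "z1 \<in> J \<or> z2 \<in> J \<or> (\<exists>w\<in>V-{z1,z2}. (\<not> emp w \<or> w \<in> J) \<and> dist E w z1 \<noteq> dist E w z2)"
      using CJ e z unfolding Cond_def by blast
    then obtain w where w: "w \<in> V" "w \<noteq> z1" "w \<noteq> z2" "dist E w z1 \<noteq> dist E w z2" using z by blast
    then show False using twin_dist[OF NN w(2,3)] by simp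
  qed
  have fin2: "finite (I \<inter> U - J)" using finU by simp
  have c1: "card (I \<inter> U - J) \<le> 1" using one card_le_Suc0_iff_eq[OF fin2] by simp
  have "I \<inter> U \<subseteq> (J \<inter> U) \<union> (I \<inter> U - J)" by blast
  then have "card (I \<inter> U) \<le> card ((J \<inter> U) \<union> (I \<inter> U - J))" using finU by (intro card_mono) auto
  also have "\<dots> \<le> card (J \<inter> U) + card (I \<inter> U - J)" by (rule card_Un_le)
  finally show ?thesis using c1 by simp
qed

lemma lower_comb: assumes JI: "J \<subseteq> I" and CJ: "Cond J"
  shows "(\<Sum>U\<in>CI. card (I \<inter> U) - 1) + varrho V E HV HE rep \<le> card J"
proof -
  define B where "B = {U \<in> CI. I \<inter> U \<subseteq> J}"
  define A where "A = (J - TT) \<union> rep ` B"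
  have finJ: "finite J" using finite_subset[OF subset_trans[OF JI IV] finV] .
  have finCI: "finite CI" using finCL by simp
  have finB: "finite B" unfolding B_def by (rule finite_subset[OF _ finCI]) auto
  have AXE: "A \<subseteq> XE"
  proof
    fix a assume "a \<in> A"
    then show "a \<in> XE"
    proof (cases "a \<in> J - TT")
      case True then show ?thesis using XE_notT[of a] JI by auto
    next
      case False
      then obtain U where "U \<in> B" "a = rep U" using \<open>a \<in> A\<close> unfolding A_def by blast
      then show ?thesis using rep_XE[of U] unfolding B_def by auto
    qed
  qed
  have prime: "\<exists>x'. x' \<in> I \<and> x' \<notin> J \<and> N x' = N x" if x: "x \<in> XE" "x \<notin> A" for x
  proof (cases "x \<in> J")
    case False then show ?thesis using x XE_sub by blast
  next
    case True
    then have "x \<in> TT" using x unfolding A_def by blast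
    then obtain U where U: "U \<in> CL" "x \<in> U" using TT_iff by blast
    have xI: "x \<in> I" using x XE_sub by blast
    then have UCI: "U \<in> CI" using U by blast
    have xr: "x = rep U" using XE_rep[OF x(1) U] .
    have "U \<notin> B" using x(2) xr unfolding A_def by blast
    then obtain x' where x': "x' \<in> I \<inter> U" "x' \<notin> J" using UCI unfolding B_def by blast
    have "N x' = N x" using CL_same[OF U(1)] x' U(2) by blast
    then show ?thesis using x' by blast
  qed
  have validA: "validA A" unfolding validA_def
  proof (intro conjI allI impI)
    show "A \<subseteq> XE" by fact
  next
    fix x y assume r: "RR x y"
    have xX: "x \<in> XE" and yX: "y \<in> XE" and e: "E x y"
      and eqd: "\<And>u. u \<in> V \<Longrightarrow> u \<notin> VE \<Longrightarrow> u \<noteq> x \<Longrightarrow> u \<noteq> y \<Longrightarrow> dist E u x = dist E u y"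
      using RR_D[OF r] by auto
    have xy: "x \<noteq> y" using e Eirr by auto
    have xV: "x \<in> V" and yV: "y \<in> V" using e EV by auto
    show "\<exists>a\<in>A. dist E a x \<noteq> dist E a y"
    proof (cases "x \<in> A \<or> y \<in> A")
      case True
      show ?thesis
      proof (cases "x \<in> A")
        case True
        then show ?thesis using xy dist_zero_iff[of E x y] by (intro bexI[of _ x]) auto
      next
        case False
        then have "y \<in> A" using \<open>x \<in> A \<or> y \<in> A\<close> by blast
        then show ?thesis using xy dist_zero_iff[of E y x] by (intro bexI[of _ y]) auto
      qed
    next
      case False
      obtain x' where x': "x' \<in> I" "x' \<notin> J" "N x' = N x" using prime xX False by blast
      obtain y' where y': "y' \<in> I" "y' \<notin> J" "N y' = N y" using prime yX False by blast
      have x'V: "x' \<in> V" and y'V: "y' \<in> V" using x'(1) y'(1) IV by auto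
      have xy': "x' \<noteq> y'"
      proof
        assume "x' = y'"
        then have NN: "N x = N y" using x'(3) y'(3) by simp
        obtain U where U: "U \<in> CL" "x \<in> U" "y \<in> U" using cl_of[OF xV yV NN xy] by blast
        show False using XE_rep[OF xX U(1,2)] XE_rep[OF yX U(1,3)] xy by simp
      qed
      have "y \<in> N x" using e by (simp add: N_iff)
      then have "y \<in> N x'" using x'(3) by simp
      then have "x' \<in> N y" using Esym by (auto simp: N_iff)
      then have "x' \<in> N y'" using y'(3) by simp
      then have e': "E x' y'" using xy' Esym by (auto simp: N_iff)
      obtain w where w: "w \<in> V" "w \<noteq> x'" "w \<noteq> y'" "\<not> emp w \<or> w \<in> J" "dist E w x' \<noteq> dist E w y'"
        using CJ e' x'(1,2) y'(1,2) unfolding Cond_def by blast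
      have wx: "w \<noteq> x"
      proof
        assume wx: "w = x"
        have "x' \<in> N x'" by (simp add: N_iff)
        then have "x' \<in> N x" using x'(3) by simp
        then have "E x x'" using wx w(2) by (auto simp: N_iff)
        then have d1: "dist E w x' = 1" using wx dist_one_iff[of E, OF Eirr'] by simp
        have "x \<in> N y" using e Esym by (auto simp: N_iff)
        then have "x \<in> N y'" using y'(3) by simp
        then have "E y' x" using wx w(3) by (auto simp: N_iff)
        then have "E x y'" using Esym by simp
        then have "dist E w y' = 1" using wx dist_one_iff[of E, OF Eirr'] by simp
        then show False using d1 w(5) by simp
      qed
      have wy: "w \<noteq> y"
      proof
        assume wy: "w = y"
        have "y' \<in> N y'" by (simp add: N_iff)
        then have "y' \<in> N y" using y'(3) by simp
        then have "E y y'" using wy w(3) by (auto simp: N_iff)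
        then have d1: "dist E w y' = 1" using wy dist_one_iff[of E, OF Eirr'] by simp
        have "y \<in> N x" using e by (simp add: N_iff)
        then have "y \<in> N x'" using x'(3) by simp
        then have "E x' y" using wy w(2) by (auto simp: N_iff)
        then have "E y x'" using Esym by simp
        then have "dist E w x' = 1" using wy dist_one_iff[of E, OF Eirr'] by simp
        then show False using d1 w(5) by simp
      qed
      have dx: "dist E w x = dist E w x'"
      proof (cases "x = x'")
        case False then show ?thesis using twin_dist[of x x' w] x'(3) wx w(2) by simp
      qed simp
      have dy: "dist E w y = dist E w y'"
      proof (cases "y = y'")
        case False then show ?thesis using twin_dist[of y y' w] y'(3) wy w(3) by simp
      qed simp
      have dd: "dist E w x \<noteq> dist E w y" using dx dy w(5) by simp
      have "w \<in> VE" using eqd[OF w(1) _ wx wy] dd by blast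
      then have "w \<notin> TT" "emp w" using VE_iff by auto
      then have "w \<in> A" using w(4) unfolding A_def by blast
      then show ?thesis using dd by blast
    qed
  qed
  have cardA: "card A \<le> card (J - TT) + card B"
  proof -
    have "card A \<le> card (J - TT) + card (rep ` B)" unfolding A_def by (rule card_Un_le)
    also have "card (rep ` B) \<le> card B" using finB by (rule card_image_le)
    finally show ?thesis by simp
  qed
  have JT: "J \<inter> TT = (\<Union>U\<in>CI. J \<inter> U)" using JI unfolding T_set_def by auto
  have cJT: "card (J \<inter> TT) = (\<Sum>U\<in>CI. card (J \<inter> U))"
    unfolding JT
  proof (rule card_UN_disjoint)
    show "finite CI" by fact
    show "\<forall>U\<in>CI. finite (J \<inter> U)" using finJ by simp
    show "\<forall>U\<in>CI. \<forall>U'\<in>CI. U \<noteq> U' \<longrightarrow> J \<inter> U \<inter> (J \<inter> U') = {}"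
    proof (intro ballI impI)
      fix U U' assume "U \<in> CI" "U' \<in> CI" "U \<noteq> U'"
      then show "J \<inter> U \<inter> (J \<inter> U') = {}" using CL_disj[of U U'] by auto
    qed
  qed
  have cJ: "card J = card (J - TT) + card (J \<inter> TT)"
  proof -
    have "J = (J - TT) \<union> (J \<inter> TT)" by blast
    then have "card J = card ((J - TT) \<union> (J \<inter> TT))" by simp
    also have "\<dots> = card (J - TT) + card (J \<inter> TT)" using finJ by (intro card_Un_disjoint) auto
    finally show ?thesis .
  qed
  have per: "(card (I \<inter> U) - 1) + of_bool (U \<in> B) \<le> card (J \<inter> U)" if U: "U \<in> CI" for U
  proof (cases "U \<in> B")
    case True
    then have "J \<inter> U = I \<inter> U" using JI unfolding B_def by blast
    moreover have "card (I \<inter> U) \<ge> 1"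
    proof -
      have "finite (I \<inter> U)" using CL_fin[of U] U by simp
      then have "card (I \<inter> U) > 0" using U card_gt_0_iff by blast
      then show ?thesis by simp
    qed
    ultimately show ?thesis using True by simp
  next
    case False then show ?thesis using step1[OF JI CJ U] by simp
  qed
  have "(\<Sum>U\<in>CI. card (I \<inter> U) - 1) + card B = (\<Sum>U\<in>CI. (card (I \<inter> U) - 1) + of_bool (U \<in> B))"
  proof -
    have BC: "B \<subseteq> CI" unfolding B_def by blast
    have "(\<Sum>U\<in>CI. of_bool (U \<in> B)) = card B"
      using finCI BC by (simp add: Int_absorb1 Int_absorb2)
    then show ?thesis by (simp add: sum.distrib)
  qed
  also have "\<dots> \<le> (\<Sum>U\<in>CI. card (J \<inter> U))" using per by (rule sum_mono)
  finally have "(\<Sum>U\<in>CI. card (I \<inter> U) - 1) + card B \<le> card (J \<inter> TT)" using cJT by simp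
  moreover have "varrho V E HV HE rep \<le> card A" using varrho_le[OF validA] .
  ultimately show ?thesis using cardA cJ by simp
qed


lemma relpow_sym: "(E ^^ k) x y \<Longrightarrow> (E ^^ k) y x"
proof (induction k arbitrary: y)
  case 0 then show ?case by simp
next
  case (Suc k)
  obtain z where z: "(E ^^ k) x z" "E z y" using Suc.prems by (auto elim: relpowp_Suc_E)
  have "(E ^^ k) z x" using Suc.IH[OF z(1)] .
  moreover have "E y z" using Esym[OF z(2)] .
  ultimately show ?case by (intro relpowp_Suc_I2)
qed

lemma dist_sym: "dist E x y = dist E y x"
proof -
  have "{k. (E ^^ k) x y} = {k. (E ^^ k) y x}" using relpow_sym by blast
  then show ?thesis unfolding dist_def by simp
qed

lemma upper_comb:
  shows "\<exists>J. J \<subseteq> I \<and> Cond J \<and> card J \<le> (\<Sum>U\<in>CI. card (I \<inter> U) - 1) + varrho V E HV HE rep"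
proof -
  obtain A where A: "validA A" "card A = varrho V E HV HE rep" using varrho_ex by blast
  have AX: "A \<subseteq> XE" using A(1) unfolding validA_def by simp
  have AD: "\<And>x y. RR x y \<Longrightarrow> \<exists>a\<in>A. dist E a x \<noteq> dist E a y" using A(1) unfolding validA_def by simp
  define J where "J = (I - XE) \<union> A"
  have JI: "J \<subseteq> I" using AX XE_sub unfolding J_def by auto
  have finCI: "finite CI" using finCL by simp
  have c1: "card (I - XE) \<le> (\<Sum>U\<in>CL. card ((I \<inter> U) - {rep U}))"
    unfolding I_minus_XE using finCL by (rule card_UN_le)
  have c2: "(\<Sum>U\<in>CL. card ((I \<inter> U) - {rep U})) = (\<Sum>U\<in>CI. card ((I \<inter> U) - {rep U}))"
    using finCL by (intro sum.mono_neutral_right) auto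
  have c3: "(\<Sum>U\<in>CI. card ((I \<inter> U) - {rep U})) = (\<Sum>U\<in>CI. card (I \<inter> U) - 1)"
  proof (rule sum.cong)
    fix U assume U: "U \<in> CI"
    have "rep U \<in> I \<inter> U" using repI U by simp
    then show "card ((I \<inter> U) - {rep U}) = card (I \<inter> U) - 1" by (rule card_Diff_singleton)
  qed simp
  have cJ: "card J \<le> card (I - XE) + card A" unfolding J_def by (rule card_Un_le)
  have CJ: "Cond J" unfolding Cond_def
  proof (intro allI impI)
    fix u v assume e: "E u v" and uI: "u \<in> I" and vI: "v \<in> I"
    show "u \<in> J \<or> v \<in> J \<or> (\<exists>w\<in>V-{u,v}. (\<not> emp w \<or> w \<in> J) \<and> dist E w u \<noteq> dist E w v)"
    proof (cases "u \<in> J \<or> v \<in> J")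
      case True then show ?thesis by blast
    next
      case False
      then have uX: "u \<in> XE" and vX: "v \<in> XE" and uA: "u \<notin> A" and vA: "v \<notin> A"
        using uI vI unfolding J_def by auto
      have uV: "u \<in> V" and vV: "v \<in> V" using e EV by auto
      have "\<exists>w\<in>V-{u,v}. (\<not> emp w \<or> w \<in> J) \<and> dist E w u \<noteq> dist E w v"
      proof (cases "RR u v")
        case True
        then obtain a where a: "a \<in> A" "dist E a u \<noteq> dist E a v" using AD by blast
        have "a \<noteq> u" "a \<noteq> v" using a(1) uA vA by auto
        moreover have "a \<in> V" using a(1) AX XE_sub IV by auto
        moreover have "a \<in> J" using a(1) unfolding J_def by simp
        ultimately show ?thesis using a(2) by blast
      next
        case False
        then obtain w where w: "w \<in> V" "w \<notin> VE" "w \<noteq> u" "w \<noteq> v" "dist E w u \<noteq> dist E w v"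
          using uX vX e unfolding rel_R_def by auto
        show ?thesis
        proof (cases "emp w")
          case False then show ?thesis using w by blast
        next
          case empw: True
          have wI: "w \<in> I" using emp_I[OF w(1) empw] .
          have wT: "w \<in> TT" using w(1,2) empw VE_iff by blast
          show ?thesis
          proof (cases "w \<in> XE")
            case False
            then have "w \<in> J" using wI unfolding J_def by simp
            then show ?thesis using w by blast
          next
            case wX: True
            obtain U where U: "U \<in> CL" "w \<in> U" using wT TT_iff by blast
            have "\<exists>w'\<in>U. w' \<noteq> w"
            proof (rule ccontr)
              assume "\<not> ?thesis"
              then have "U \<subseteq> {w}" by blast
              then have "card U \<le> 1" using card_mono[of "{w}" U] by simp
              then show False using CL_D[OF U(1)] by auto
            qed
            then obtain w' where w': "w' \<in> U" "w' \<noteq> w" by blast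
            have NN: "N w' = N w" using CL_same[OF U(1) w'(1) U(2)] .
            have w'V: "w' \<in> V" using CL_sub[OF U(1)] w'(1) by blast
            have w'u: "w' \<noteq> u"
            proof
              assume h: "w' = u"
              then have "N u = N w" using NN by simp
              then have "E w u" using twin_adj[of w u] w(3) by simp
              then have d1: "dist E w u = 1" using dist_one_iff[of E, OF Eirr'] by simp
              have "v \<in> N u" using e by (simp add: N_iff)
              then have "v \<in> N w" using \<open>N u = N w\<close> by simp
              then have "E w v" using w(4) by (auto simp: N_iff)
              then have "dist E w v = 1" using dist_one_iff[of E, OF Eirr'] by simp
              then show False using d1 w(5) by simp
            qed
            have w'v: "w' \<noteq> v"
            proof
              assume h: "w' = v"
              then have "N v = N w" using NN by simp
              then have "E w v" using twin_adj[of w v] w(4) by simp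
              then have d1: "dist E w v = 1" using dist_one_iff[of E, OF Eirr'] by simp
              have "u \<in> N v" using Esym[OF e] by (simp add: N_iff)
              then have "u \<in> N w" using \<open>N v = N w\<close> by simp
              then have "E w u" using w(3) by (auto simp: N_iff)
              then have "dist E w u = 1" using dist_one_iff[of E, OF Eirr'] by simp
              then show False using d1 w(5) by simp
            qed
            have du: "dist E w' u = dist E w u"
              using twin_dist[OF NN, of u] w(3) w'u dist_sym[of w' u] dist_sym[of w u] by simp
            have dv: "dist E w' v = dist E w v"
              using twin_dist[OF NN, of v] w(4) w'v dist_sym[of w' v] dist_sym[of w v] by simp
            have act: "\<not> emp w' \<or> w' \<in> J"
            proof (cases "w' \<in> I")
              case False then show ?thesis using emp_I[OF w'V] by blast
            next
              case True
              have "w = rep U" using XE_rep[OF wX U] .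
              then have "w' \<in> (I \<inter> U) - {rep U}" using True w' by simp
              then have "w' \<in> I - XE" unfolding I_minus_XE using U(1) by blast
              then show ?thesis unfolding J_def by simp
            qed
            show ?thesis using act du dv w(5) w'V w'u w'v by (intro bexI[of _ w']) auto
          qed
        qed
      qed
      then show ?thesis by blast
    qed
  qed
  have "card J \<le> (\<Sum>U\<in>CI. card (I \<inter> U) - 1) + varrho V E HV HE rep"
    using cJ c1 c2 c3 A(2) by simp
  then show ?thesis using JI CJ by blast
qed

end

theorem theorem2:
  fixes V :: "'a set" and E :: "'a \<Rightarrow> 'a \<Rightarrow> bool"
    and HV :: "'a \<Rightarrow> 'b set" and HE :: "'a \<Rightarrow> 'b \<Rightarrow> 'b \<Rightarrow> bool"
    and rep :: "'a set \<Rightarrow> 'a"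
  assumes "connected_graph V E"
    and "card V \<ge> 2"
    and "\<And>u. u \<in> V \<Longrightarrow> graph (HV u) (HE u)"
    and "\<And>U. U \<in> twin_classes_nonsingleton V E \<Longrightarrow> I_set V HV HE \<inter> U \<noteq> {}
           \<Longrightarrow> rep U \<in> I_set V HV HE \<inter> U"
  shows "local_metric_dim (lex_V V HV) (lex_E V E HV HE)
    = (\<Sum>u\<in>V. local_adj_dim (HV u) (HE u))
      + (\<Sum>U\<in>{U \<in> twin_classes_nonsingleton V E. I_set V HV HE \<inter> U \<noteq> {}}.
            card (I_set V HV HE \<inter> U) - 1)
      + varrho V E HV HE rep"
proof -
  interpret S: setting_rep V E HV HE rep
    using assms by unfold_locales auto
  have "local_metric_dim (lex_V V HV) (lex_E V E HV HE)
     = S.adsum + ((\<Sum>U\<in>{U \<in> twin_classes_nonsingleton V E. I_set V HV HE \<inter> U \<noteq> {}}.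
            card (I_set V HV HE \<inter> U) - 1) + varrho V E HV HE rep)"
    by (rule S.final_reduce[OF S.lower_comb S.upper_comb])
  then show ?thesis unfolding S.adsum_def by (simp add: add.assoc)
qed

end
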